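(* Let $X$ be a nonempty open bounded subset of $\mathbb{R}^n$. For every $f\in C_{ae}(X,\mathbb{R})$ there is a unique lower semicontinuous quasicontinuous function $f^-$ belonging to the class $f$ and a unique upper semicontinuous quasicontinuous function $f^+$ belonging to the class $f$; the pair $(f^-,f^+)$ is characterized as the pair of representatives of $f$ satisfying $(f^-)^*=f^+$ and $(f^+)_*=f^-$; moreover $\int_X f^+(x)\,dx=\int_X f^-(x)\,dx$.
   Context: $C_{ae}(X,\mathbb{R})$ is the set of equivalence classes of bounded functions $X\to\mathbb{R}$ continuous at almost every point, modulo equality almost everywhere. A function $\phi:X\to\mathbb{R}$ is quasicontinuous if for every $x\in X$ and $\varepsilon>0$ there is an open set $\mathcal{U}\subset X$ with $x\in\mathrm{cl}\,\mathcal{U}$ and $|\phi(x)-\phi(y)|<\varepsilon$ for all $y\in\mathcal{U}$. For a bounded function $g$ on $X$, $(g)^*(x)=\limsup_{y\to x}g(y)$ is its upper semicontinuous hull and $(g)_*(x)=\liminf_{y\to x}g(y)$ its lower semicontinuous hull. *)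

theory Defs
  imports "HOL-Analysis.Analysis"
begin

definition lsc_on :: "'a::topological_space set \<Rightarrow> ('a \<Rightarrow> real) \<Rightarrow> bool" where
  "lsc_on X f \<longleftrightarrow> (\<forall>x\<in>X. \<forall>t. t < f x \<longrightarrow> (\<forall>\<^sub>F y in at x within X. t < f y))"

definition usc_on :: "'a::topological_space set \<Rightarrow> ('a \<Rightarrow> real) \<Rightarrow> bool" where
  "usc_on X f \<longleftrightarrow> (\<forall>x\<in>X. \<forall>t. f x < t \<longrightarrow> (\<forall>\<^sub>F y in at x within X. f y < t))"

definition quasicontinuous_on :: "'a::topological_space set \<Rightarrow> ('a \<Rightarrow> real) \<Rightarrow> bool" where
  "quasicontinuous_on X \<phi> \<longleftrightarrow>
     (\<forall>x\<in>X. \<forall>\<epsilon>>0. \<exists>U. openin (top_of_set X) U \<and> x \<in> closure U \<and>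
        (\<forall>y\<in>U. \<bar>\<phi> x - \<phi> y\<bar> < \<epsilon>))"

text \<open>Upper semicontinuous hull (g)^*(x) = limsup_{y->x} g(y) (limsup including the point x),
  and lower semicontinuous hull (g)_*(x) = liminf_{y->x} g(y), for bounded g on X.\<close>
definition usc_hull :: "'a::metric_space set \<Rightarrow> ('a \<Rightarrow> real) \<Rightarrow> 'a \<Rightarrow> real" where
  "usc_hull X g x = (INF e\<in>{0<..}. SUP y\<in>ball x e \<inter> X. g y)"

definition lsc_hull :: "'a::metric_space set \<Rightarrow> ('a \<Rightarrow> real) \<Rightarrow> 'a \<Rightarrow> real" where
  "lsc_hull X g x = (SUP e\<in>{0<..}. INF y\<in>ball x e \<inter> X. g y)"

text \<open>h is a representative of the class of f in C_ae(X,R): h bounded on X and h = f a.e. on X.\<close>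
definition in_class :: "'a::euclidean_space set \<Rightarrow> ('a \<Rightarrow> real) \<Rightarrow> ('a \<Rightarrow> real) \<Rightarrow> bool" where
  "in_class X f h \<longleftrightarrow> bounded (h ` X) \<and> (AE x in lebesgue_on X. h x = f x)"

definition C_ae :: "'a::euclidean_space set \<Rightarrow> ('a \<Rightarrow> real) \<Rightarrow> bool" where
  "C_ae X f \<longleftrightarrow> bounded (f ` X) \<and> (AE x in lebesgue_on X. isCont f x)"

end

theory Submission
  imports Defs
begin


lemma uh_U1:
  assumes dense: "\<forall>r>0. ball x r \<inter> A \<noteq> {}" and bnd: "\<forall>y\<in>A. \<bar>g y\<bar> \<le> B" and ep: "\<epsilon> > 0"
  shows "\<exists>r>0. \<forall>y\<in>ball x r \<inter> A. g y < usc_hull A g x + \<epsilon>"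
proof -
  have ba: "bdd_above (g ` (ball x e \<inter> A))" for e
    using bnd by (intro bdd_aboveI[of _ B]) (auto simp: abs_le_iff)
  have lb: "(SUP y\<in>ball x e \<inter> A. g y) \<ge> - B" if e0: "e > 0" for e
  proof -
    obtain y where y: "y \<in> ball x e \<inter> A" using dense e0 by blast
    have "g y \<le> (SUP y\<in>ball x e \<inter> A. g y)" by (rule cSUP_upper[OF y ba])
    moreover have "g y \<ge> -B" using bnd y by (auto simp: abs_le_iff)
    ultimately show ?thesis by linarith
  qed
  have bb: "bdd_below ((\<lambda>e. SUP y\<in>ball x e \<inter> A. g y) ` {0<..})"
    using lb by (intro bdd_belowI[of _ "-B"]) auto
  have "(INF e\<in>{0<..}. SUP y\<in>ball x e \<inter> A. g y) < usc_hull A g x + \<epsilon>"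
    using ep by (simp add: usc_hull_def)
  then obtain e where e: "e > 0" "(SUP y\<in>ball x e \<inter> A. g y) < usc_hull A g x + \<epsilon>"
    using cINF_less_iff[OF _ bb] by auto
  show ?thesis
  proof (intro exI[of _ e] conjI ballI)
    fix y assume "y \<in> ball x e \<inter> A"
    from cSUP_upper[OF this ba] e show "g y < usc_hull A g x + \<epsilon>" by linarith
  qed (use e in auto)
qed

lemma uh_U2:
  assumes dense: "\<forall>r>0. ball x r \<inter> A \<noteq> {}" and bnd: "\<forall>y\<in>A. \<bar>g y\<bar> \<le> B" and ep: "\<epsilon> > 0"
    and r: "r > 0"
  shows "\<exists>y\<in>ball x r \<inter> A. g y > usc_hull A g x - \<epsilon>"
proof -
  have ba: "bdd_above (g ` (ball x e \<inter> A))" for e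
    using bnd by (intro bdd_aboveI[of _ B]) (auto simp: abs_le_iff)
  have lb: "(SUP y\<in>ball x e \<inter> A. g y) \<ge> - B" if e0: "e > 0" for e
  proof -
    obtain y where y: "y \<in> ball x e \<inter> A" using dense e0 by blast
    have "g y \<le> (SUP y\<in>ball x e \<inter> A. g y)" by (rule cSUP_upper[OF y ba])
    moreover have "g y \<ge> -B" using bnd y by (auto simp: abs_le_iff)
    ultimately show ?thesis by linarith
  qed
  have bb: "bdd_below ((\<lambda>e. SUP y\<in>ball x e \<inter> A. g y) ` {0<..})"
    using lb by (intro bdd_belowI[of _ "-B"]) auto
  have "usc_hull A g x \<le> (SUP y\<in>ball x r \<inter> A. g y)"
    unfolding usc_hull_def using r by (intro cINF_lower[OF bb]) auto
  then have "usc_hull A g x - \<epsilon> < (SUP y\<in>ball x r \<inter> A. g y)" using ep by linarith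
  then show ?thesis
    using less_cSUP_iff[OF _ ba] dense r by blast
qed

lemma uh_le:
  assumes dense: "\<forall>r>0. ball x r \<inter> A \<noteq> {}" and bnd: "\<forall>y\<in>A. \<bar>g y\<bar> \<le> B"
    and H: "\<forall>\<epsilon>>0. \<exists>r>0. \<forall>y\<in>ball x r \<inter> A. g y \<le> c + \<epsilon>"
  shows "usc_hull A g x \<le> c"
proof (rule ccontr)
  assume neg: "\<not> ?thesis"
  define \<epsilon> where "\<epsilon> = (usc_hull A g x - c) / 2"
  have ep: "\<epsilon> > 0" using neg by (simp add: \<epsilon>_def)
  obtain r where r: "r > 0" "\<forall>y\<in>ball x r \<inter> A. g y \<le> c + \<epsilon>" using H ep by blast
  obtain y where y: "y\<in>ball x r \<inter> A" "g y > usc_hull A g x - \<epsilon>"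
    using uh_U2[OF dense bnd ep r(1)] by blast
  have "g y \<le> c + \<epsilon>" using r(2) y(1) by blast
  with y(2) show False unfolding \<epsilon>_def by (simp add: field_simps)
qed

lemma uh_ge:
  assumes dense: "\<forall>r>0. ball x r \<inter> A \<noteq> {}" and bnd: "\<forall>y\<in>A. \<bar>g y\<bar> \<le> B"
    and H: "\<forall>\<epsilon>>0. \<forall>r>0. \<exists>y\<in>ball x r \<inter> A. g y \<ge> c - \<epsilon>"
  shows "usc_hull A g x \<ge> c"
proof (rule ccontr)
  assume neg: "\<not> ?thesis"
  define \<epsilon> where "\<epsilon> = (c - usc_hull A g x) / 2"
  have ep: "\<epsilon> > 0" using neg by (simp add: \<epsilon>_def)
  obtain r where r: "r > 0" "\<forall>y\<in>ball x r \<inter> A. g y < usc_hull A g x + \<epsilon>"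
    using uh_U1[OF dense bnd ep] by blast
  obtain y where y: "y\<in>ball x r \<inter> A" "g y \<ge> c - \<epsilon>" using H ep r(1) by blast
  have "g y < usc_hull A g x + \<epsilon>" using r(2) y(1) by blast
  with y(2) show False unfolding \<epsilon>_def by (simp add: field_simps)
qed

lemma uh_ge_self:
  assumes "z \<in> A" and bnd: "\<forall>y\<in>A. \<bar>g y\<bar> \<le> B"
  shows "usc_hull A g z \<ge> g z"
  by (rule uh_ge[OF _ bnd]) (use assms in force)+

lemma uh_cong:
  assumes "\<forall>y\<in>A. g y = g' y"
  shows "usc_hull A g x = usc_hull A g' x"
  unfolding usc_hull_def using assms by (intro INF_cong SUP_cong refl) auto

lemma lh_neg: "lsc_hull X g x = - usc_hull X (\<lambda>y. - g y) x"
proof -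
  have "usc_hull X (\<lambda>y. - g y) x = (INF e\<in>{0<..}. - (INF y\<in>ball x e \<inter> X. g y))"
    unfolding usc_hull_def
    by (intro INF_cong refl) (simp add: Inf_real_def image_image)
  also have "\<dots> = - lsc_hull X g x"
    unfolding lsc_hull_def Inf_real_def by (simp add: image_image)
  finally show ?thesis by simp
qed



lemma dense_open:
  assumes X: "open X" and V: "open V" "V \<subseteq> X" "V \<noteq> {}"
    and P: "AE y in lebesgue_on X. P y"
  shows "\<exists>y\<in>V. P y"
proof (rule ccontr)
  assume neg: "\<not> ?thesis"
  have Xs: "X \<inter> space lebesgue \<in> sets lebesgue"
    using X by simp
  have AEl: "AE y in lebesgue. y \<in> X \<longrightarrow> P y"
    using P AE_restrict_space_iff[OF Xs] by simp
  obtain N where N0: "{y \<in> space lebesgue. \<not> (y \<in> X \<longrightarrow> P y)} \<subseteq> N" "emeasure lebesgue N = 0" "N \<in> sets lebesgue"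
    using AE_E[OF AEl] by metis
  have N: "N \<in> null_sets lebesgue" "{y \<in> space lebesgue. \<not> (y \<in> X \<longrightarrow> P y)} \<subseteq> N"
    using N0 by auto
  have "V \<subseteq> N" using N(2) neg V(2) by auto
  then have "V \<in> null_sets lebesgue"
    using N(1) V(1) by (simp add: null_sets_subset)
  then show False using open_not_negligible[OF V(1) V(3)] negligible_iff_null_sets by blast
qed

lemma dense_ball:
  assumes X: "open X" and x: "x \<in> X" and r: "r > 0"
    and P: "AE y in lebesgue_on X. P y"
  shows "\<exists>y\<in>ball x r \<inter> X. P y"
proof (rule dense_open[OF X _ _ _ P])
  show "open (ball x r \<inter> X)" using X by auto
  show "ball x r \<inter> X \<noteq> {}" using x r centre_in_ball by blast
qed auto

lemma ball_sub:
  assumes "open X" "x \<in> X" obtains e where "e > 0" "ball x e \<subseteq> X"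
  using assms open_contains_ball by blast

locale cae =
  fixes X :: "'a::euclidean_space set" and f :: "'a \<Rightarrow> real"
  assumes openX: "open X" and cae: "C_ae X f"
begin

definition S where "S = {x\<in>X. isCont f x}"
definition fp where "fp = usc_hull S f"

lemma AE_cont: "AE x in lebesgue_on X. isCont f x"
  using cae by (simp add: C_ae_def)

lemma bnd_ex: "\<exists>B. \<forall>y\<in>X. \<bar>f y\<bar> \<le> B"
  using cae unfolding C_ae_def bounded_iff by auto

lemma S_dense: "x \<in> X \<Longrightarrow> \<forall>r>0. ball x r \<inter> S \<noteq> {}"
  using dense_ball[OF openX _ _ AE_cont] unfolding S_def by blast

lemma S_sub: "S \<subseteq> X" by (auto simp: S_def)

end


lemma ball_trans: "y \<in> ball z (r - dist x z) \<Longrightarrow> y \<in> ball x r"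
  using dist_triangle[of x y z] by auto

lemma usc_uh:
  assumes X: "open X" and AX: "A \<subseteq> X" and dense: "\<forall>z\<in>X. \<forall>r>0. ball z r \<inter> A \<noteq> {}"
    and bnd: "\<forall>y\<in>A. \<bar>g y\<bar> \<le> C"
  shows "usc_on X (usc_hull A g)"
  unfolding usc_on_def
proof (intro ballI allI impI)
  fix x t assume x: "x \<in> X" and t: "usc_hull A g x < t"
  define \<epsilon> where "\<epsilon> = (t - usc_hull A g x) / 2"
  have ep: "\<epsilon> > 0" using t by (simp add: \<epsilon>_def)
  obtain r where r: "r > 0" "\<forall>y\<in>ball x r \<inter> A. g y < usc_hull A g x + \<epsilon>"
    using uh_U1[OF bspec[OF dense x] bnd ep] by blast
  show "\<forall>\<^sub>F z in at x within X. usc_hull A g z < t"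
    unfolding eventually_at
  proof (intro exI[of _ r] conjI ballI impI)
    fix z assume z: "z \<in> X" "z \<noteq> x \<and> dist z x < r"
    have "usc_hull A g z \<le> usc_hull A g x + \<epsilon>"
    proof (rule uh_le[OF bspec[OF dense z(1)] bnd], intro allI impI)
      fix \<epsilon>' :: real assume "\<epsilon>' > 0"
      show "\<exists>r'>0. \<forall>y\<in>ball z r' \<inter> A. g y \<le> usc_hull A g x + \<epsilon> + \<epsilon>'"
      proof (intro exI[of _ "r - dist x z"] conjI ballI)
        fix y assume y: "y \<in> ball z (r - dist x z) \<inter> A"
        then have "y \<in> ball x r \<inter> A" using ball_trans by blast
        with r(2) \<open>\<epsilon>' > 0\<close> show "g y \<le> usc_hull A g x + \<epsilon> + \<epsilon>'" by force
      qed (use z in \<open>auto simp: dist_commute\<close>)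
    qed
    then show "usc_hull A g z < t" using t by (simp add: \<epsilon>_def field_simps)
  qed (use r in auto)
qed

context cae
begin

lemma B_ex: obtains B where "\<forall>y\<in>X. \<bar>f y\<bar> \<le> B" "\<forall>y\<in>S. \<bar>f y\<bar> \<le> B"
  using bnd_ex S_sub by blast

lemma fp_cont: assumes y: "y \<in> S" shows "fp y = f y"
proof -
  obtain B where B: "\<forall>y\<in>S. \<bar>f y\<bar> \<le> B" using B_ex by blast
  have yX: "y \<in> X" and c: "isCont f y" using y by (auto simp: S_def)
  have "fp y \<le> f y" unfolding fp_def
  proof (rule uh_le[OF S_dense[OF yX] B], intro allI impI)
    fix \<epsilon> :: real assume ep: "\<epsilon> > 0"
    obtain d where d: "d > 0" "\<forall>z. dist z y < d \<longrightarrow> dist (f z) (f y) < \<epsilon>"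
      using c ep unfolding continuous_at_eps_delta by blast
    show "\<exists>r>0. \<forall>w\<in>ball y r \<inter> S. f w \<le> f y + \<epsilon>"
      using d by (intro exI[of _ d]) (force simp: dist_real_def dist_commute)
  qed
  moreover have "fp y \<ge> f y" unfolding fp_def
    by (rule uh_ge_self[OF y B])
  ultimately show ?thesis by simp
qed

lemma fp_bnd: obtains C where "\<forall>x\<in>X. \<bar>fp x\<bar> \<le> C"
proof -
  obtain B where B: "\<forall>y\<in>S. \<bar>f y\<bar> \<le> B" using B_ex by blast
  have "\<bar>fp x\<bar> \<le> B" if x: "x \<in> X" for x
  proof -
    have "fp x \<le> B" unfolding fp_def
      by (rule uh_le[OF S_dense[OF x] B]) (use B in \<open>force simp: abs_le_iff\<close>)
    moreover have "fp x \<ge> -B" unfolding fp_def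
    proof (rule uh_ge[OF S_dense[OF x] B], intro allI impI)
      fix \<epsilon> r :: real assume "\<epsilon> > 0" "r > 0"
      then obtain w where "w \<in> ball x r \<inter> S" using S_dense[OF x] by blast
      then show "\<exists>w\<in>ball x r \<inter> S. f w \<ge> -B - \<epsilon>" using B \<open>\<epsilon> > 0\<close> by (force simp: abs_le_iff)
    qed
    ultimately show ?thesis by simp
  qed
  then show ?thesis using that by blast
qed

lemma fp_class: "in_class X f fp"
  unfolding in_class_def
proof
  obtain C where C: "\<forall>x\<in>X. \<bar>fp x\<bar> \<le> C" using fp_bnd by blast
  then show "bounded (fp ` X)" unfolding bounded_iff by auto
  show "AE x in lebesgue_on X. fp x = f x"
    using AE_cont
  proof (rule AE_mp)
    show "AE x in lebesgue_on X. isCont f x \<longrightarrow> fp x = f x"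
      by (rule AE_I2) (auto simp: fp_cont S_def space_restrict_space)
  qed
qed

lemma fp_usc: "usc_on X fp"
proof -
  obtain B where B: "\<forall>y\<in>S. \<bar>f y\<bar> \<le> B" using B_ex by blast
  show ?thesis unfolding fp_def
    by (rule usc_uh[OF openX S_sub _ B]) (use S_dense in blast)
qed

end


context cae
begin

lemma fp_U1: "x \<in> X \<Longrightarrow> \<epsilon> > 0 \<Longrightarrow> \<exists>r>0. \<forall>y\<in>ball x r \<inter> S. f y < fp x + \<epsilon>"
  using uh_U1[OF S_dense _] B_ex unfolding fp_def by metis

lemma fp_U2: "x \<in> X \<Longrightarrow> \<epsilon> > 0 \<Longrightarrow> r > 0 \<Longrightarrow> \<exists>y\<in>ball x r \<inter> S. f y > fp x - \<epsilon>"
  using uh_U2[OF S_dense _] B_ex unfolding fp_def by metis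

lemma fp_le: "x \<in> X \<Longrightarrow> (\<forall>\<epsilon>>0. \<exists>r>0. \<forall>y\<in>ball x r \<inter> S. f y \<le> c + \<epsilon>) \<Longrightarrow> fp x \<le> c"
  using uh_le[OF S_dense _] B_ex unfolding fp_def by metis

lemma fp_ge: "x \<in> X \<Longrightarrow> (\<forall>\<epsilon>>0. \<forall>r>0. \<exists>y\<in>ball x r \<inter> S. f y \<ge> c - \<epsilon>) \<Longrightarrow> fp x \<ge> c"
  using uh_ge[OF S_dense _] B_ex unfolding fp_def by metis

lemma fp_qc: "quasicontinuous_on X fp"
  unfolding quasicontinuous_on_def
proof (intro ballI allI impI)
  fix x :: 'a and \<epsilon> :: real assume x: "x \<in> X" and ep: "\<epsilon> > 0"
  define U where "U = interior {z\<in>X. \<bar>fp x - fp z\<bar> < \<epsilon>}"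
  have Uo: "open U" by (simp add: U_def)
  have UX: "U \<subseteq> X" using interior_subset unfolding U_def by blast
  have "openin (top_of_set X) U"
    unfolding openin_open using Uo UX by (intro exI[of _ U]) auto
  moreover have "x \<in> closure U" unfolding closure_approachable
  proof (intro allI impI)
    fix d :: real assume d: "d > 0"
    have ep2: "\<epsilon>/2 > 0" using ep by simp
    obtain r1 where r1: "r1 > 0" "\<forall>y\<in>ball x r1 \<inter> S. f y < fp x + \<epsilon>/2"
      using fp_U1[OF x ep2] by blast
    obtain e0 where e0: "e0 > 0" "ball x e0 \<subseteq> X" using ball_sub[OF openX x] by blast
    define e1 where "e1 = min (min r1 d) e0"
    have e1: "e1 > 0" using r1 d e0 by (simp add: e1_def)
    obtain y where y: "y \<in> ball x e1 \<inter> S" "f y > fp x - \<epsilon>/2"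
      using fp_U2[OF x ep2 e1] by blast
    have cy: "isCont f y" using y by (simp add: S_def)
    have pos: "f y - (fp x - \<epsilon>/2) > 0" using y by simp
    obtain \<rho> where \<rho>: "\<rho> > 0" "\<forall>z. dist z y < \<rho> \<longrightarrow> dist (f z) (f y) < f y - (fp x - \<epsilon>/2)"
      using cy pos unfolding continuous_at_eps_delta by blast
    define \<rho>' where "\<rho>' = min \<rho> (e1 - dist x y)"
    have \<rho>': "\<rho>' > 0" using \<rho> y by (simp add: \<rho>'_def)
    have sub: "ball y \<rho>' \<subseteq> {z\<in>X. \<bar>fp x - fp z\<bar> < \<epsilon>}"
    proof
      fix z assume z: "z \<in> ball y \<rho>'"
      have zx: "z \<in> ball x e1"
        using ball_trans[of z y e1 x] z by (auto simp: \<rho>'_def)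
      have zX: "z \<in> X" using zx e0 by (auto simp: e1_def)
      have up: "fp z \<le> fp x + \<epsilon>/2"
      proof (rule fp_le[OF zX], intro allI impI)
        fix \<epsilon>' :: real assume "\<epsilon>' > 0"
        show "\<exists>r>0. \<forall>w\<in>ball z r \<inter> S. f w \<le> fp x + \<epsilon>/2 + \<epsilon>'"
        proof (intro exI[of _ "e1 - dist x z"] conjI ballI)
          fix w assume w: "w \<in> ball z (e1 - dist x z) \<inter> S"
          then have "w \<in> ball x r1 \<inter> S" using ball_trans[of w z e1 x] by (auto simp: e1_def)
          then show "f w \<le> fp x + \<epsilon>/2 + \<epsilon>'" using r1(2) \<open>\<epsilon>' > 0\<close> by force
        qed (use zx in \<open>auto simp: dist_commute\<close>)
      qed
      have lo: "fp z \<ge> fp x - \<epsilon>/2"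
      proof (rule fp_ge[OF zX], intro allI impI)
        fix \<epsilon>' r :: real assume "\<epsilon>' > 0" "r > 0"
        have "min r (\<rho>' - dist y z) > 0" using z \<open>r > 0\<close> by (simp add: dist_commute)
        then obtain w where w: "w \<in> ball z (min r (\<rho>' - dist y z)) \<inter> S"
          using S_dense[OF zX] by blast
        have "w \<in> ball y \<rho>'" using ball_trans[of w z \<rho>' y] w by auto
        then have "dist w y < \<rho>" by (simp add: \<rho>'_def dist_commute)
        then have "dist (f w) (f y) < f y - (fp x - \<epsilon>/2)" using \<rho> by blast
        then have "f w \<ge> fp x - \<epsilon>/2 - \<epsilon>'" using \<open>\<epsilon>' > 0\<close> by (simp add: dist_real_def abs_less_iff)
        then show "\<exists>w\<in>ball z r \<inter> S. f w \<ge> fp x - \<epsilon>/2 - \<epsilon>'" using w by auto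
      qed
      have "\<bar>fp x - fp z\<bar> < \<epsilon>" using up lo ep by (simp add: abs_less_iff)
      with zX show "z \<in> {z\<in>X. \<bar>fp x - fp z\<bar> < \<epsilon>}" by simp
    qed
    have "ball y \<rho>' \<subseteq> U" unfolding U_def by (rule interior_maximal[OF sub]) simp
    then have "y \<in> U" using \<rho>' by auto
    moreover have "dist y x < d" using y by (simp add: e1_def dist_commute)
    ultimately show "\<exists>y\<in>U. dist y x < d" by blast
  qed
  moreover have "\<forall>y\<in>U. \<bar>fp x - fp y\<bar> < \<epsilon>" using interior_subset unfolding U_def by blast
  ultimately show "\<exists>U. openin (top_of_set X) U \<and> x \<in> closure U \<and> (\<forall>y\<in>U. \<bar>fp x - fp y\<bar> < \<epsilon>)"
    by blast
qed

lemma fp_unique: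
  assumes hc: "in_class X f h" and hu: "usc_on X h" and hq: "quasicontinuous_on X h" and x: "x \<in> X"
  shows "h x = fp x"
proof -
  have hAE: "AE y in lebesgue_on X. h y = f y" using hc by (simp add: in_class_def)
  have Q: "AE y in lebesgue_on X. isCont f y \<and> h y = f y"
    using AE_cont hAE by eventually_elim auto
  have "fp x \<le> h x"
  proof (rule fp_le[OF x], intro allI impI)
    fix \<epsilon> :: real assume ep: "\<epsilon> > 0"
    have "h x < h x + \<epsilon>/2" using ep by simp
    then have "\<forall>\<^sub>F y in at x within X. h y < h x + \<epsilon>/2" using hu x unfolding usc_on_def by blast
    then obtain d where d: "d > 0" "\<forall>y\<in>X. y \<noteq> x \<and> dist y x < d \<longrightarrow> h y < h x + \<epsilon>/2"
      unfolding eventually_at by blast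
    obtain e0 where e0: "e0 > 0" "ball x e0 \<subseteq> X" using ball_sub[OF openX x] by blast
    define r where "r = min d e0"
    have r: "r > 0" using d e0 by (simp add: r_def)
    show "\<exists>r>0. \<forall>w\<in>ball x r \<inter> S. f w \<le> h x + \<epsilon>"
    proof (intro exI[of _ r] conjI ballI r)
      fix w assume w: "w \<in> ball x r \<inter> S"
      show "f w \<le> h x + \<epsilon>"
      proof (rule ccontr)
        assume neg: "\<not> f w \<le> h x + \<epsilon>"
        have wX: "w \<in> X" and cw: "isCont f w" using w by (auto simp: S_def)
        have ep2: "\<epsilon>/2 > 0" using ep by simp
        obtain \<rho> where \<rho>: "\<rho> > 0" "\<forall>z. dist z w < \<rho> \<longrightarrow> dist (f z) (f w) < \<epsilon>/2"
          using cw ep2 unfolding continuous_at_eps_delta by blast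
        define \<rho>' where "\<rho>' = min \<rho> (r - dist x w)"
        have \<rho>': "\<rho>' > 0" using \<rho> w by (simp add: \<rho>'_def)
        obtain y where y: "y \<in> ball w \<rho>' \<inter> X" "isCont f y \<and> h y = f y"
          using dense_ball[OF openX wX \<rho>' Q] by blast
        have yx: "y \<in> ball x r" using ball_trans[of y w r x] y by (auto simp: \<rho>'_def)
        have hy: "h y < h x + \<epsilon>/2"
        proof (cases "y = x")
          case True then show ?thesis using ep by simp
        next
          case False then show ?thesis using d(2) y(1) yx by (auto simp: r_def dist_commute)
        qed
        have "dist (f y) (f w) < \<epsilon>/2" using \<rho> y(1) by (auto simp: \<rho>'_def dist_commute)
        then have "f y > f w - \<epsilon>/2" unfolding dist_real_def using abs_ge_minus_self[of "f y - f w"] by linarith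
        then show False using neg hy y(2) by simp
      qed
    qed
  qed
  moreover have "fp x \<ge> h x"
  proof (rule fp_ge[OF x], intro allI impI)
    fix \<epsilon> r :: real assume ep: "\<epsilon> > 0" and r: "r > 0"
    obtain U where U: "openin (top_of_set X) U" "x \<in> closure U" "\<forall>y\<in>U. \<bar>h x - h y\<bar> < \<epsilon>"
      using hq x ep unfolding quasicontinuous_on_def by blast
    have Uo: "open U" using openin_open_trans[OF U(1) openX] .
    have UX: "U \<subseteq> X" using openin_imp_subset[OF U(1)] .
    obtain u where u: "u \<in> U" "dist u x < r" using U(2) r unfolding closure_approachable by blast
    have uin: "u \<in> ball x r \<inter> U" using u by (simp add: dist_commute)
    obtain w where w: "w \<in> ball x r \<inter> U" "isCont f w \<and> h w = f w"
    proof -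
      have "\<exists>w\<in>ball x r \<inter> U. isCont f w \<and> h w = f w"
        by (rule dense_open[OF openX _ _ _ Q]) (use Uo UX uin in auto)
      then show ?thesis using that by blast
    qed
    have "w \<in> S" using w UX by (auto simp: S_def)
    moreover have "f w \<ge> h x - \<epsilon>" using U(3) w by (force simp: abs_less_iff)
    ultimately show "\<exists>w\<in>ball x r \<inter> S. f w \<ge> h x - \<epsilon>" using w by blast
  qed
  ultimately show ?thesis by simp
qed

end


lemma cont_neg: "isCont (\<lambda>x. - f x) y \<longleftrightarrow> isCont f y" for f :: "'a::t2_space \<Rightarrow> real"
proof
  assume "isCont (\<lambda>x. - f x) y"
  from isCont_minus[OF this] show "isCont f y" by simp
qed (rule isCont_minus)

lemma bounded_neg_img: "bounded ((\<lambda>x. - h x) ` X) \<longleftrightarrow> bounded (h ` X)" for h :: "_ \<Rightarrow> real"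
  unfolding bounded_iff by auto

lemma cae_neg: "cae X f \<Longrightarrow> cae X (\<lambda>x. - f x)"
  unfolding cae_def C_ae_def using bounded_neg_img[of f X] by (simp add: cont_neg)

lemma in_class_neg: "in_class X (\<lambda>x. - f x) (\<lambda>x. - h x) \<longleftrightarrow> in_class X f h"
  unfolding in_class_def using bounded_neg_img[of h X] by simp

lemma lsc_usc_neg: "lsc_on X h \<longleftrightarrow> usc_on X (\<lambda>x. - h x)"
  unfolding lsc_on_def usc_on_def
proof safe
  fix x t assume H: "\<forall>x\<in>X. \<forall>t. t < h x \<longrightarrow> (\<forall>\<^sub>F y in at x within X. t < h y)" and x: "x \<in> X" and t: "- h x < t"
  have "\<forall>\<^sub>F y in at x within X. -t < h y" using H[rule_format, OF x, of "-t"] t by simp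
  then show "\<forall>\<^sub>F y in at x within X. - h y < t" by (rule eventually_mono) simp
next
  fix x t assume H: "\<forall>x\<in>X. \<forall>t. - h x < t \<longrightarrow> (\<forall>\<^sub>F y in at x within X. - h y < t)" and x: "x \<in> X" and t: "t < h x"
  have "\<forall>\<^sub>F y in at x within X. - h y < -t" using H[rule_format, OF x, of "-t"] t by simp
  then show "\<forall>\<^sub>F y in at x within X. t < h y" by (rule eventually_mono) simp
qed

lemma qc_neg: "quasicontinuous_on X (\<lambda>x. - h x) \<longleftrightarrow> quasicontinuous_on X h"
  unfolding quasicontinuous_on_def by (simp add: abs_minus_commute)

lemma eventually_within_cong:
  assumes "\<forall>z\<in>X. P z \<longleftrightarrow> Q z" shows "(\<forall>\<^sub>F y in at x within X. P y) \<longleftrightarrow> (\<forall>\<^sub>F y in at x within X. Q y)"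
  unfolding eventually_at_filter by (rule iffI; erule eventually_mono) (use assms in auto)

lemma lsc_cong: "\<forall>z\<in>X. a z = a' z \<Longrightarrow> lsc_on X a \<Longrightarrow> lsc_on X a'"
  unfolding lsc_on_def
proof (intro ballI allI impI)
  fix x t assume eq: "\<forall>z\<in>X. a z = a' z" and H: "\<forall>x\<in>X. \<forall>t. t < a x \<longrightarrow> (\<forall>\<^sub>F y in at x within X. t < a y)"
    and x: "x \<in> X" and t: "t < a' x"
  then have "\<forall>\<^sub>F y in at x within X. t < a y" by auto
  then show "\<forall>\<^sub>F y in at x within X. t < a' y" using eventually_within_cong[of X "\<lambda>y. t < a y" "\<lambda>y. t < a' y"] eq by auto
qed

lemma usc_cong: "\<forall>z\<in>X. a z = a' z \<Longrightarrow> usc_on X a \<Longrightarrow> usc_on X a'"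
  using lsc_cong[of X "\<lambda>z. - a z" "\<lambda>z. - a' z"] lsc_usc_neg[of X "\<lambda>z. - a z"] lsc_usc_neg[of X "\<lambda>z. - a' z"]
  by simp

lemma qc_cong: "\<forall>z\<in>X. a z = a' z \<Longrightarrow> quasicontinuous_on X a \<Longrightarrow> quasicontinuous_on X a'"
  unfolding quasicontinuous_on_def
proof (intro ballI allI impI)
  fix x and \<epsilon> :: real assume eq: "\<forall>z\<in>X. a z = a' z"
    and H: "\<forall>x\<in>X. \<forall>\<epsilon>>0. \<exists>U. openin (top_of_set X) U \<and> x \<in> closure U \<and> (\<forall>y\<in>U. \<bar>a x - a y\<bar> < \<epsilon>)"
    and x: "x \<in> X" and ep: "\<epsilon> > 0"
  then obtain U where U: "openin (top_of_set X) U" "x \<in> closure U" "\<forall>y\<in>U. \<bar>a x - a y\<bar> < \<epsilon>" by blast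
  have UX: "U \<subseteq> X" using openin_imp_subset[OF U(1)] .
  have "\<forall>y\<in>U. \<bar>a' x - a' y\<bar> < \<epsilon>"
  proof
    fix y assume y: "y \<in> U"
    then have "a y = a' y" using UX eq by blast
    moreover have "a x = a' x" using x eq by blast
    ultimately show "\<bar>a' x - a' y\<bar> < \<epsilon>" using U(3) y by metis
  qed
  then show "\<exists>U. openin (top_of_set X) U \<and> x \<in> closure U \<and> (\<forall>y\<in>U. \<bar>a' x - a' y\<bar> < \<epsilon>)"
    using U by blast
qed

lemma usc_meas:
  assumes X: "open X" and u: "usc_on X g"
  shows "g \<in> borel_measurable (lebesgue_on X)"
proof (rule borel_measurableI_less)
  fix p
  have op: "open {x\<in>X. g x < p}"
    unfolding open_contains_ball
  proof (intro ballI)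
    fix x assume x: "x \<in> {x\<in>X. g x < p}"
    then have "\<forall>\<^sub>F y in at x within X. g y < p" using u unfolding usc_on_def by auto
    then obtain d where d: "d > 0" "\<forall>y\<in>X. y \<noteq> x \<and> dist y x < d \<longrightarrow> g y < p"
      unfolding eventually_at by blast
    obtain e0 where e0: "e0 > 0" "ball x e0 \<subseteq> X" using ball_sub[OF X] x by blast
    show "\<exists>e>0. ball x e \<subseteq> {x\<in>X. g x < p}"
    proof (intro exI[of _ "min d e0"] conjI subsetI)
      fix y assume y: "y \<in> ball x (min d e0)"
      then have yX: "y \<in> X" using e0 by auto
      show "y \<in> {x\<in>X. g x < p}"
      proof (cases "y = x")
        case True then show ?thesis using x by simp
      next
        case False then show ?thesis using d y yX by (auto simp: dist_commute)
      qed
    qed (use d e0 in auto)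
  qed
  have Xs: "X \<inter> space lebesgue \<in> sets lebesgue" using X by simp
  show "{x \<in> space (lebesgue_on X). g x < p} \<in> sets (lebesgue_on X)"
    using op by (simp add: sets_restrict_space_iff[OF Xs] space_restrict_space)
qed

lemma qc_pair:
  assumes X: "open X" and le: "\<forall>z\<in>X. a z \<le> b z" and la: "lsc_on X a" and ub: "usc_on X b"
    and bh: "\<forall>z\<in>X. b z = usc_hull X a z" and bnd: "\<forall>y\<in>X. \<bar>a y\<bar> \<le> C"
  shows "quasicontinuous_on X b"
  unfolding quasicontinuous_on_def
proof (intro ballI allI impI)
  fix x :: 'a and \<epsilon> :: real assume x: "x \<in> X" and ep: "\<epsilon> > 0"
  define U where "U = interior {z\<in>X. \<bar>b x - b z\<bar> < \<epsilon>}"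
  have Uo: "open U" by (simp add: U_def)
  have UX: "U \<subseteq> X" using interior_subset unfolding U_def by blast
  have "openin (top_of_set X) U"
    unfolding openin_open using Uo UX by (intro exI[of _ U]) auto
  moreover have "x \<in> closure U" unfolding closure_approachable
  proof (intro allI impI)
    fix d :: real assume d: "d > 0"
    have "b x < b x + \<epsilon>" using ep by simp
    then have "\<forall>\<^sub>F y in at x within X. b y < b x + \<epsilon>" using ub x unfolding usc_on_def by blast
    then obtain d1 where d1: "d1 > 0" "\<forall>y\<in>X. y \<noteq> x \<and> dist y x < d1 \<longrightarrow> b y < b x + \<epsilon>"
      unfolding eventually_at by blast
    obtain e0 where e0: "e0 > 0" "ball x e0 \<subseteq> X" using ball_sub[OF X x] by blast
    define e1 where "e1 = min (min d1 d) e0"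
    have e1: "e1 > 0" using d1 d e0 by (simp add: e1_def)
    have dn: "\<forall>r>0. ball x r \<inter> X \<noteq> {}" using x by (metis centre_in_ball disjoint_iff)
    obtain y where y: "y \<in> ball x e1 \<inter> X" "a y > usc_hull X a x - \<epsilon>"
      using uh_U2[OF dn bnd ep e1] by blast
    have ay: "a y > b x - \<epsilon>" using y bh x by simp
    then have "\<forall>\<^sub>F z in at y within X. b x - \<epsilon> < a z" using la y unfolding lsc_on_def by blast
    then obtain d2 where d2: "d2 > 0" "\<forall>z\<in>X. z \<noteq> y \<and> dist z y < d2 \<longrightarrow> b x - \<epsilon> < a z"
      unfolding eventually_at by blast
    define \<rho> where "\<rho> = min d2 (e1 - dist x y)"
    have \<rho>: "\<rho> > 0" using d2 y by (simp add: \<rho>_def)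
    have sub: "ball y \<rho> \<subseteq> {z\<in>X. \<bar>b x - b z\<bar> < \<epsilon>}"
    proof
      fix z assume z: "z \<in> ball y \<rho>"
      have zx: "z \<in> ball x e1"
        using ball_trans[of z y e1 x] z by (auto simp: \<rho>_def)
      have zX: "z \<in> X" using zx e0 by (auto simp: e1_def)
      have az: "a z > b x - \<epsilon>"
      proof (cases "z = y")
        case True then show ?thesis using ay by simp
      next
        case False then show ?thesis using d2(2) zX z by (auto simp: \<rho>_def dist_commute)
      qed
      have lo: "b z > b x - \<epsilon>" using az le zX by force
      have up: "b z < b x + \<epsilon>"
      proof (cases "z = x")
        case True then show ?thesis using ep by simp
      next
        case False then show ?thesis using d1(2) zX zx by (auto simp: e1_def dist_commute)
      qed
      show "z \<in> {z\<in>X. \<bar>b x - b z\<bar> < \<epsilon>}" using lo up zX by (simp add: abs_less_iff)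
    qed
    have "ball y \<rho> \<subseteq> U" unfolding U_def by (rule interior_maximal[OF sub]) simp
    then have "y \<in> U" using \<rho> by auto
    moreover have "dist y x < d" using y by (simp add: e1_def dist_commute)
    ultimately show "\<exists>y\<in>U. dist y x < d" by blast
  qed
  moreover have "\<forall>y\<in>U. \<bar>b x - b y\<bar> < \<epsilon>" using interior_subset unfolding U_def by blast
  ultimately show "\<exists>U. openin (top_of_set X) U \<and> x \<in> closure U \<and> (\<forall>y\<in>U. \<bar>b x - b y\<bar> < \<epsilon>)"
    by blast
qed



lemma hull_fm:
  assumes cf: "cae X f" and x: "x \<in> X"
  shows "usc_hull X (\<lambda>z. - cae.fp X (\<lambda>y. - f y) z) x = cae.fp X f x"
proof -
  interpret F: cae X f by (rule cf)
  interpret G: cae X "\<lambda>y. - f y" by (rule cae_neg[OF cf])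
  have GS: "G.S = F.S" by (simp add: G.S_def F.S_def cont_neg)
  obtain C where C: "\<forall>x\<in>X. \<bar>G.fp x\<bar> \<le> C" using G.fp_bnd by blast
  have bnd: "\<forall>y\<in>X. \<bar>- G.fp y\<bar> \<le> C" using C by simp
  have dn: "\<forall>r>0. ball x r \<inter> X \<noteq> {}" using x by (metis centre_in_ball disjoint_iff)
  have "usc_hull X (\<lambda>z. - G.fp z) x \<le> F.fp x"
  proof (rule uh_le[OF dn bnd], intro allI impI)
    fix \<epsilon> :: real assume ep: "\<epsilon> > 0"
    obtain r where r: "r > 0" "\<forall>y\<in>ball x r \<inter> F.S. f y < F.fp x + \<epsilon>"
      using F.fp_U1[OF x ep] by blast
    show "\<exists>r>0. \<forall>z\<in>ball x r \<inter> X. - G.fp z \<le> F.fp x + \<epsilon>"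
    proof (intro exI[of _ r] conjI ballI r(1))
      fix z assume z: "z \<in> ball x r \<inter> X"
      have zX: "z \<in> X" using z by simp
      have "G.fp z \<ge> -(F.fp x + \<epsilon>)"
      proof (rule G.fp_ge[OF zX], intro allI impI)
        fix \<epsilon>' r' :: real assume e': "\<epsilon>' > 0" and r': "r' > 0"
        have "min r' (r - dist x z) > 0" using z r' by simp
        then obtain w where w: "w \<in> ball z (min r' (r - dist x z)) \<inter> G.S"
          using G.S_dense[OF zX] by blast
        have "w \<in> ball x r \<inter> F.S" using ball_trans[of w z r x] w GS by auto
        then have "f w < F.fp x + \<epsilon>" using r(2) by blast
        then show "\<exists>w\<in>ball z r' \<inter> G.S. - f w \<ge> -(F.fp x + \<epsilon>) - \<epsilon>'"
          using w e' by (intro bexI[of _ w]) auto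
      qed
      then show "- G.fp z \<le> F.fp x + \<epsilon>" by simp
    qed
  qed
  moreover have "usc_hull X (\<lambda>z. - G.fp z) x \<ge> F.fp x"
  proof (rule uh_ge[OF dn bnd], intro allI impI)
    fix \<epsilon> r :: real assume ep: "\<epsilon> > 0" and r: "r > 0"
    obtain w where w: "w \<in> ball x r \<inter> F.S" "f w > F.fp x - \<epsilon>" using F.fp_U2[OF x ep r] by blast
    have "G.fp w = - f w" using G.fp_cont w GS by auto
    moreover have "w \<in> X" using w F.S_sub by auto
    ultimately show "\<exists>z\<in>ball x r \<inter> X. - G.fp z \<ge> F.fp x - \<epsilon>" using w by (intro bexI[of _ w]) auto
  qed
  ultimately show ?thesis by simp
qed

theorem proposition2p2:
  fixes X :: "'a::euclidean_space set" and f :: "'a \<Rightarrow> real"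
  assumes "X \<noteq> {}" and "open X" and "bounded X"
    and "C_ae X f"
  shows "\<exists>fm fp.
     (in_class X f fm \<and> lsc_on X fm \<and> quasicontinuous_on X fm) \<and>
     (\<forall>h. in_class X f h \<and> lsc_on X h \<and> quasicontinuous_on X h \<longrightarrow> (\<forall>x\<in>X. h x = fm x)) \<and>
     (in_class X f fp \<and> usc_on X fp \<and> quasicontinuous_on X fp) \<and>
     (\<forall>h. in_class X f h \<and> usc_on X h \<and> quasicontinuous_on X h \<longrightarrow> (\<forall>x\<in>X. h x = fp x)) \<and>
     (\<forall>a b. in_class X f a \<and> in_class X f b \<longrightarrow>
        ((\<forall>x\<in>X. usc_hull X a x = b x \<and> lsc_hull X b x = a x) \<longleftrightarrow>
         (\<forall>x\<in>X. a x = fm x \<and> b x = fp x))) \<and>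
     integral\<^sup>L (lebesgue_on X) fp = integral\<^sup>L (lebesgue_on X) fm"
proof -
  have cf: "cae X f" using assms by (simp add: cae_def)
  have openX: "open X" by fact
  interpret F: cae X f by (rule cf)
  interpret G: cae X "\<lambda>y. - f y" by (rule cae_neg[OF cf])
  define fp where "fp = F.fp"
  define fm where "fm = (\<lambda>x. - G.fp x)"
  have nfm: "(\<lambda>x. - fm x) = G.fp" by (simp add: fm_def)
  have fm_class: "in_class X f fm" using G.fp_class in_class_neg[of X f fm] by (simp add: nfm)
  have fm_lsc: "lsc_on X fm" using G.fp_usc lsc_usc_neg[of X fm] by (simp add: nfm)
  have fm_qc: "quasicontinuous_on X fm" using G.fp_qc qc_neg[of X fm] by (simp add: nfm)
  have fm_unique: "\<forall>h. in_class X f h \<and> lsc_on X h \<and> quasicontinuous_on X h \<longrightarrow> (\<forall>x\<in>X. h x = fm x)"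
  proof (intro allI impI ballI)
    fix h x assume h: "in_class X f h \<and> lsc_on X h \<and> quasicontinuous_on X h" and x: "x \<in> X"
    have "(\<lambda>x. - h x) x = G.fp x"
      by (rule G.fp_unique[OF _ _ _ x]) (use h in_class_neg[of X f h] lsc_usc_neg[of X h] qc_neg[of X h] in auto)
    then show "h x = fm x" by (simp add: fm_def)
  qed
  have fp_unique: "\<forall>h. in_class X f h \<and> usc_on X h \<and> quasicontinuous_on X h \<longrightarrow> (\<forall>x\<in>X. h x = fp x)"
    using F.fp_unique unfolding fp_def by blast
  have char: "\<forall>a b. in_class X f a \<and> in_class X f b \<longrightarrow>
        ((\<forall>x\<in>X. usc_hull X a x = b x \<and> lsc_hull X b x = a x) \<longleftrightarrow>
         (\<forall>x\<in>X. a x = fm x \<and> b x = fp x))"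
  proof (intro allI impI iffI)
    fix a b assume ab: "in_class X f a \<and> in_class X f b"
      and H: "\<forall>x\<in>X. usc_hull X a x = b x \<and> lsc_hull X b x = a x"
    obtain Ca where Ca: "\<forall>y\<in>X. \<bar>a y\<bar> \<le> Ca" using ab unfolding in_class_def bounded_iff by auto
    obtain Cb where Cb: "\<forall>y\<in>X. \<bar>b y\<bar> \<le> Cb" using ab unfolding in_class_def bounded_iff by auto
    have Cb': "\<forall>y\<in>X. \<bar>- b y\<bar> \<le> Cb" using Cb by simp
    have dX: "\<forall>z\<in>X. \<forall>r>0. ball z r \<inter> X \<noteq> {}" by (metis centre_in_ball disjoint_iff)
    have aeq: "\<forall>z\<in>X. a z = - usc_hull X (\<lambda>y. - b y) z" using H lh_neg by metis
    have ub: "usc_on X b"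
      by (rule usc_cong[OF _ usc_uh[OF openX subset_refl dX Ca]]) (use H in auto)
    have "usc_on X (usc_hull X (\<lambda>y. - b y))" by (rule usc_uh[OF openX subset_refl dX Cb'])
    then have "lsc_on X (\<lambda>z. - usc_hull X (\<lambda>y. - b y) z)"
      using lsc_usc_neg[of X "\<lambda>z. - usc_hull X (\<lambda>y. - b y) z"] by simp
    then have la: "lsc_on X a" by (rule lsc_cong[rotated]) (use aeq in auto)
    have le: "\<forall>z\<in>X. a z \<le> b z"
    proof
      fix z assume z: "z \<in> X"
      have "usc_hull X (\<lambda>y. - b y) z \<ge> - b z" by (rule uh_ge_self[OF z Cb'])
      then show "a z \<le> b z" using aeq z by simp
    qed
    have bh: "\<forall>z\<in>X. b z = usc_hull X a z" using H by simp
    have qb: "quasicontinuous_on X b" by (rule qc_pair[OF openX le la ub bh Ca])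
    have le': "\<forall>z\<in>X. - b z \<le> - a z" using le by simp
    have la': "lsc_on X (\<lambda>z. - b z)" using ub lsc_usc_neg[of X "\<lambda>z. - b z"] by simp
    have ub': "usc_on X (\<lambda>z. - a z)" using la lsc_usc_neg[of X a] by simp
    have bh': "\<forall>z\<in>X. - a z = usc_hull X (\<lambda>y. - b y) z" using aeq by simp
    have "quasicontinuous_on X (\<lambda>z. - a z)" by (rule qc_pair[OF openX le' la' ub' bh' Cb'])
    then have qa: "quasicontinuous_on X a" using qc_neg by blast
    show "\<forall>x\<in>X. a x = fm x \<and> b x = fp x"
      using fm_unique fp_unique ab la qa ub qb by blast
  next
    fix a b assume ab: "in_class X f a \<and> in_class X f b"
      and H: "\<forall>x\<in>X. a x = fm x \<and> b x = fp x"
    show "\<forall>x\<in>X. usc_hull X a x = b x \<and> lsc_hull X b x = a x"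
    proof
      fix x assume x: "x \<in> X"
      have "usc_hull X a x = usc_hull X fm x" by (rule uh_cong) (use H in auto)
      also have "\<dots> = fp x" using hull_fm[OF cf x] by (simp add: fm_def fp_def)
      also have "\<dots> = b x" using H x by simp
      finally have 1: "usc_hull X a x = b x" .
      have "lsc_hull X b x = - usc_hull X (\<lambda>y. - b y) x" by (rule lh_neg)
      also have "usc_hull X (\<lambda>y. - b y) x = usc_hull X (\<lambda>z. - F.fp z) x"
        by (rule uh_cong) (use H in \<open>auto simp: fp_def\<close>)
      also have "\<dots> = G.fp x" using hull_fm[OF cae_neg[OF cf] x] by simp
      finally have "lsc_hull X b x = a x" using H x by (simp add: fm_def)
      with 1 show "usc_hull X a x = b x \<and> lsc_hull X b x = a x" by simp
    qed
  qed
  have mp: "fp \<in> borel_measurable (lebesgue_on X)" unfolding fp_def by (rule usc_meas[OF openX F.fp_usc])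
  have mm: "fm \<in> borel_measurable (lebesgue_on X)" unfolding fm_def
    by (rule borel_measurable_uminus[OF usc_meas[OF openX G.fp_usc]])
  have a1: "AE x in lebesgue_on X. fp x = f x" using F.fp_class unfolding in_class_def fp_def by blast
  have a2: "AE x in lebesgue_on X. fm x = f x" using fm_class unfolding in_class_def by blast
  have "AE x in lebesgue_on X. fp x = fm x" using a1 a2 by eventually_elim simp
  then have int: "integral\<^sup>L (lebesgue_on X) fp = integral\<^sup>L (lebesgue_on X) fm"
    by (rule integral_cong_AE[OF mp mm])
  show ?thesis
    by (intro exI[of _ fm] exI[of _ fp] conjI fm_class fm_lsc fm_qc fm_unique fp_unique char int)
      (use F.fp_class F.fp_usc F.fp_qc in \<open>simp_all add: fp_def\<close>)
qed


end
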